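(* Let $\Theta$ and $\Theta'$ be spaces of input histories satisfying the free-choice condition, with $E^\Theta\cap E^{\Theta'}=\emptyset$. Then the causal completions of the parallel composition $\Theta\cup\Theta'$ are $$\mathrm{CC}(\Theta\cup\Theta')=\{\hat\Theta\cup\hat\Theta':\ \hat\Theta\in\mathrm{CC}(\Theta),\ \hat\Theta'\in\mathrm{CC}(\Theta')\}.$$
   Context: A partial function is a function $f$ with domain $\mathrm{dom}(f)$ a subset of an index set, taking values in given sets; ordered by restriction ($f\le g$ iff $\mathrm{dom}(f)\subseteq\mathrm{dom}(g)$, $g|_{\mathrm{dom}(f)}=f$). Compatible = agreeing on common domain; a compatible set $\mathcal F$ has join $\bigvee\mathcal F$ (union). A set $\Theta$ is $\vee$-prime if for compatible $\mathcal F\subseteq\Theta$ with $\bigvee\mathcal F\in\Theta$ we have $\bigvee\mathcal F\in\mathcal F$. A space of input histories is a finite $\vee$-prime set of partial functions; $E^\Theta=\bigcup_{h\in\Theta}\mathrm{dom}(h)$, $I^\Theta_\omega=\{h(\omega):h\in\Theta,\omega\in\mathrm{dom}(h)\}$, $\mathrm{Ext}(\Theta)=\{\bigvee\mathcal F:\emptyset\ne\mathcal F\subseteq\Theta\text{ compatible}\}$. Free-choice: maximal elements of $\mathrm{Ext}(\Theta)$ are exactly the total functions in $\prod_{\omega\in E^\Theta}I^\Theta_\omega$. $\mathrm{tips}_\Theta(h)=\mathrm{dom}(h)\setminus\bigcup\{\mathrm{dom}(k):k\in\mathrm{Ext}(\Theta),k<h\}$. Causally complete: free-choice and $|\mathrm{tips}_\Theta(h)|=1$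 for all $h\in\Theta$. Spaces are ordered by $\Theta_1\le\Theta_2$ iff $\mathrm{Ext}(\Theta_1)\supseteq\mathrm{Ext}(\Theta_2)$. The causal completions $\mathrm{CC}(\Theta)$ of a space $\Theta$ satisfying free choice are the maximal elements of $\{\Theta_1\le\Theta:\Theta_1\text{ causally complete}\}$. The parallel composition of spaces with disjoint event sets is their set-theoretic union. *)

theory Defs
  imports Main
begin

type_synonym ('e,'v) pfun = "'e \<Rightarrow> 'v option"

definition pf_le :: "('e,'v) pfun \<Rightarrow> ('e,'v) pfun \<Rightarrow> bool" where
  "pf_le f g \<longleftrightarrow> f \<subseteq>\<^sub>m g"

definition pf_less :: "('e,'v) pfun \<Rightarrow> ('e,'v) pfun \<Rightarrow> bool" where
  "pf_less f g \<longleftrightarrow> pf_le f g \<and> f \<noteq> g"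

definition compatible :: "('e,'v) pfun set \<Rightarrow> bool" where
  "compatible F \<longleftrightarrow> (\<forall>f\<in>F. \<forall>g\<in>F. \<forall>w. w \<in> dom f \<and> w \<in> dom g \<longrightarrow> f w = g w)"

text \<open>Join (union) of a family of partial functions; meaningful for compatible families.\<close>
definition pf_join :: "('e,'v) pfun set \<Rightarrow> ('e,'v) pfun" where
  "pf_join F = (\<lambda>w. if \<exists>f\<in>F. w \<in> dom f then (SOME f. f \<in> F \<and> w \<in> dom f) w else None)"

definition join_prime :: "('e,'v) pfun set \<Rightarrow> bool" where
  "join_prime \<Theta> \<longleftrightarrow>
     (\<forall>F. F \<subseteq> \<Theta> \<and> compatible F \<and> pf_join F \<in> \<Theta> \<longrightarrow> pf_join F \<in> F)"

definition is_space :: "('e,'v) pfun set \<Rightarrow> bool" where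
  "is_space \<Theta> \<longleftrightarrow> finite \<Theta> \<and> join_prime \<Theta>"

definition events :: "('e,'v) pfun set \<Rightarrow> 'e set" where
  "events \<Theta> = (\<Union>h\<in>\<Theta>. dom h)"

definition inputs :: "('e,'v) pfun set \<Rightarrow> 'e \<Rightarrow> 'v set" where
  "inputs \<Theta> w = {v. \<exists>h\<in>\<Theta>. w \<in> dom h \<and> h w = Some v}"

definition Ext :: "('e,'v) pfun set \<Rightarrow> ('e,'v) pfun set" where
  "Ext \<Theta> = {pf_join F | F. F \<noteq> {} \<and> F \<subseteq> \<Theta> \<and> compatible F}"

definition maximal_ext :: "('e,'v) pfun set \<Rightarrow> ('e,'v) pfun set" where
  "maximal_ext \<Theta> = {k \<in> Ext \<Theta>. \<forall>k'\<in>Ext \<Theta>. pf_le k k' \<longrightarrow> k' = k}"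

definition total_funs :: "('e,'v) pfun set \<Rightarrow> ('e,'v) pfun set" where
  "total_funs \<Theta> = {k. dom k = events \<Theta> \<and> (\<forall>w\<in>events \<Theta>. the (k w) \<in> inputs \<Theta> w)}"

definition free_choice :: "('e,'v) pfun set \<Rightarrow> bool" where
  "free_choice \<Theta> \<longleftrightarrow> maximal_ext \<Theta> = total_funs \<Theta>"

definition tips :: "('e,'v) pfun set \<Rightarrow> ('e,'v) pfun \<Rightarrow> 'e set" where
  "tips \<Theta> h = dom h - (\<Union>{dom k | k. k \<in> Ext \<Theta> \<and> pf_less k h})"

definition causally_complete :: "('e,'v) pfun set \<Rightarrow> bool" where
  "causally_complete \<Theta> \<longleftrightarrow> free_choice \<Theta> \<and> (\<forall>h\<in>\<Theta>. \<exists>w. tips \<Theta> h = {w})"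

definition space_le :: "('e,'v) pfun set \<Rightarrow> ('e,'v) pfun set \<Rightarrow> bool" where
  "space_le \<Theta>1 \<Theta>2 \<longleftrightarrow> Ext \<Theta>2 \<subseteq> Ext \<Theta>1"

definition CC :: "('e,'v) pfun set \<Rightarrow> ('e,'v) pfun set set" where
  "CC \<Theta> = (let S = {\<Theta>1. is_space \<Theta>1 \<and> space_le \<Theta>1 \<Theta> \<and> causally_complete \<Theta>1} in
     {\<Theta>1 \<in> S. \<forall>\<Theta>2\<in>S. space_le \<Theta>1 \<Theta>2 \<longrightarrow> space_le \<Theta>2 \<Theta>1})"

end

theory Submission
  imports Defs
begin

lemma join_eq:
  assumes "compatible F" "f \<in> F" "w \<in> dom f"
  shows "pf_join F w = f w"
proof -
  have ex: "\<exists>g. g \<in> F \<and> w \<in> dom g" using assms by blast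
  let ?g = "SOME g. g \<in> F \<and> w \<in> dom g"
  have g: "?g \<in> F \<and> w \<in> dom ?g" using someI_ex[OF ex] .
  then have "?g w = f w" using assms unfolding compatible_def by blast
  moreover have "pf_join F w = ?g w" unfolding pf_join_def using assms by auto
  ultimately show ?thesis by simp
qed

lemma join_None: "(\<And>f. f \<in> F \<Longrightarrow> w \<notin> dom f) \<Longrightarrow> pf_join F w = None"
  unfolding pf_join_def by auto

lemma join_Some:
  assumes "pf_join F w = Some v" shows "\<exists>f\<in>F. f w = Some v"
proof -
  have ex: "\<exists>g. g \<in> F \<and> w \<in> dom g"
  proof (rule ccontr)
    assume "\<not> ?thesis"
    then have "pf_join F w = None" by (intro join_None) auto
    then show False using assms by simp
  qed
  let ?g = "SOME g. g \<in> F \<and> w \<in> dom g"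
  have g: "?g \<in> F \<and> w \<in> dom ?g" using someI_ex[OF ex] .
  have "pf_join F w = ?g w" unfolding pf_join_def using ex by auto
  then show ?thesis using g assms by auto
qed

lemma join_dom1: "dom (pf_join F) \<subseteq> (\<Union>f\<in>F. dom f)"
proof
  fix w assume "w \<in> dom (pf_join F)"
  then obtain v where v: "pf_join F w = Some v" by auto
  obtain f where "f \<in> F" "f w = Some v" using join_Some[OF v] by blast
  then show "w \<in> (\<Union>f\<in>F. dom f)" by blast
qed

lemma join_dom2: "(\<Union>f\<in>F. dom f) \<subseteq> dom (pf_join F)"
proof
  fix w assume "w \<in> (\<Union>f\<in>F. dom f)"
  then have ex: "\<exists>g. g \<in> F \<and> w \<in> dom g" by blast
  let ?g = "SOME g. g \<in> F \<and> w \<in> dom g"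
  have g: "?g \<in> F \<and> w \<in> dom ?g" using someI_ex[OF ex] .
  have "pf_join F w = ?g w" unfolding pf_join_def using ex by auto
  then show "w \<in> dom (pf_join F)" using g by auto
qed

lemma join_dom: "dom (pf_join F) = (\<Union>f\<in>F. dom f)"
  using join_dom1 join_dom2 by (rule equalityI)

lemma join_ub: "compatible F \<Longrightarrow> f \<in> F \<Longrightarrow> f \<subseteq>\<^sub>m pf_join F"
  unfolding map_le_def using join_eq by (metis (no_types))

lemma compatible_below: "(\<And>f. f \<in> F \<Longrightarrow> f \<subseteq>\<^sub>m g) \<Longrightarrow> compatible F"
  unfolding compatible_def map_le_def by (metis (no_types))

lemma join_eqI:
  assumes "compatible F" "\<And>f. f \<in> F \<Longrightarrow> f \<subseteq>\<^sub>m g" "dom g \<subseteq> (\<Union>f\<in>F. dom f)"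
  shows "pf_join F = g"
proof
  fix w
  show "pf_join F w = g w"
  proof (cases "\<exists>f\<in>F. w \<in> dom f")
    case True
    then obtain f where f: "f \<in> F" "w \<in> dom f" by blast
    then have "pf_join F w = f w" using join_eq assms by metis
    also have "\<dots> = g w" using assms(2)[OF f(1)] f(2) unfolding map_le_def by auto
    finally show ?thesis .
  next
    case False
    then have "pf_join F w = None" by (intro join_None) auto
    moreover have "g w = None" using False assms(3) by auto
    ultimately show ?thesis by simp
  qed
qed

lemma ExtE:
  assumes "k \<in> Ext P"
  shows "\<exists>F. F \<noteq> {} \<and> F \<subseteq> P \<and> compatible F \<and> pf_join F = k \<and> (\<forall>f\<in>F. f \<subseteq>\<^sub>m k)"
  using assms unfolding Ext_def using join_ub by blast

lemma ExtE2:
  assumes "k \<in> Ext P"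
  obtains F where "F \<noteq> {}" "F \<subseteq> P" "compatible F" "pf_join F = k" "\<forall>f\<in>F. f \<subseteq>\<^sub>m k"
  using ExtE[OF assms] by (elim exE conjE)

lemma ExtI: "F \<noteq> {} \<Longrightarrow> F \<subseteq> P \<Longrightarrow> compatible F \<Longrightarrow> pf_join F \<in> Ext P"
  unfolding Ext_def by blast

lemma Ext_single: assumes "h \<in> P" shows "h \<in> Ext P"
proof -
  have c: "compatible {h}" by (rule compatible_below[of _ h]) auto
  have "pf_join {h} = h" by (rule join_eqI[OF c]) auto
  then show ?thesis using ExtI[of "{h}" P] c assms by auto
qed

lemma flatten:
  assumes Fne: "F \<noteq> {}" and FQ: "F \<subseteq> Ext Q" and Fk: "\<forall>f\<in>F. f \<subseteq>\<^sub>m k"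
    and dk: "dom k \<subseteq> (\<Union>f\<in>F. dom f)"
  shows "\<exists>G. G \<noteq> {} \<and> G \<subseteq> Q \<and> compatible G \<and> pf_join G = k \<and> (\<forall>g\<in>G. \<exists>f\<in>F. g \<subseteq>\<^sub>m f)"
proof -
  have ex: "\<forall>f\<in>F. \<exists>G. G \<noteq> {} \<and> G \<subseteq> Q \<and> compatible G \<and> pf_join G = f \<and> (\<forall>g\<in>G. g \<subseteq>\<^sub>m f)"
  proof
    fix f assume "f \<in> F"
    then have "f \<in> Ext Q" using FQ by blast
    then show "\<exists>G. G \<noteq> {} \<and> G \<subseteq> Q \<and> compatible G \<and> pf_join G = f \<and> (\<forall>g\<in>G. g \<subseteq>\<^sub>m f)"
      by (rule ExtE)
  qed
  obtain Gf where Gf: "\<forall>f\<in>F. Gf f \<noteq> {} \<and> Gf f \<subseteq> Q \<and> compatible (Gf f) \<and> pf_join (Gf f) = f \<and> (\<forall>g\<in>Gf f. g \<subseteq>\<^sub>m f)"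
    using bchoice[OF ex] by (elim exE) 
  have Gne: "\<And>f. f \<in> F \<Longrightarrow> Gf f \<noteq> {}" using Gf by simp
  have GQ: "\<And>f. f \<in> F \<Longrightarrow> Gf f \<subseteq> Q" using Gf by simp
  have Gj: "\<And>f. f \<in> F \<Longrightarrow> pf_join (Gf f) = f" using Gf by simp
  have Gb: "\<And>f g. f \<in> F \<Longrightarrow> g \<in> Gf f \<Longrightarrow> g \<subseteq>\<^sub>m f" using Gf by simp
  define G where "G = (\<Union>f\<in>F. Gf f)"
  have below: "\<And>g. g \<in> G \<Longrightarrow> g \<subseteq>\<^sub>m k"
  proof -
    fix g assume "g \<in> G"
    then obtain f where f: "f \<in> F" "g \<in> Gf f" unfolding G_def by blast
    then have "g \<subseteq>\<^sub>m f" using Gb by blast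
    moreover have "f \<subseteq>\<^sub>m k" using Fk f(1) by blast
    ultimately show "g \<subseteq>\<^sub>m k" by (rule map_le_trans)
  qed
  have cG: "compatible G" using below by (rule compatible_below)
  have dk2: "dom k \<subseteq> (\<Union>g\<in>G. dom g)"
  proof
    fix w assume "w \<in> dom k"
    then obtain f where f: "f \<in> F" "w \<in> dom f" using dk by blast
    have "pf_join (Gf f) = f" using Gj f(1) by blast
    then have "w \<in> dom (pf_join (Gf f))" using f(2) by simp
    then have "w \<in> (\<Union>g\<in>Gf f. dom g)" using join_dom1[of "Gf f"] by blast
    then obtain g where "g \<in> Gf f" "w \<in> dom g" by blast
    then show "w \<in> (\<Union>g\<in>G. dom g)" unfolding G_def using f by blast
  qed
  have "pf_join G = k" using cG below dk2 by (rule join_eqI)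
  moreover have "G \<noteq> {}"
  proof -
    obtain f where "f \<in> F" using Fne by blast
    then have "Gf f \<noteq> {}" using Gne by blast
    then show ?thesis unfolding G_def using \<open>f \<in> F\<close> by blast
  qed
  moreover have "G \<subseteq> Q" unfolding G_def using GQ by blast
  moreover have "\<forall>g\<in>G. \<exists>f\<in>F. g \<subseteq>\<^sub>m f" unfolding G_def using Gb by blast
  ultimately show ?thesis using cG by (intro exI[of _ G]) simp
qed

lemma Ext_subset:
  assumes "P \<subseteq> Ext Q" shows "Ext P \<subseteq> Ext Q"
proof
  fix k assume "k \<in> Ext P"
  then obtain F where F: "F \<noteq> {}" "F \<subseteq> P" "compatible F" "pf_join F = k" "\<forall>f\<in>F. f \<subseteq>\<^sub>m k"
    by (rule ExtE2)
  have "dom k \<subseteq> (\<Union>f\<in>F. dom f)" using F(4) join_dom1[of F] by simp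
  moreover have "F \<subseteq> Ext Q" using F(2) assms by blast
  ultimately have "\<exists>G. G \<noteq> {} \<and> G \<subseteq> Q \<and> compatible G \<and> pf_join G = k \<and> (\<forall>g\<in>G. \<exists>f\<in>F. g \<subseteq>\<^sub>m f)"
    by (intro flatten[OF F(1) _ F(5)])
  then obtain G where G: "G \<noteq> {} \<and> G \<subseteq> Q \<and> compatible G \<and> pf_join G = k \<and> (\<forall>g\<in>G. \<exists>f\<in>F. g \<subseteq>\<^sub>m f)"
    by (rule exE)
  then have "pf_join G \<in> Ext Q" using ExtI[of G Q] by simp
  then show "k \<in> Ext Q" using G by simp
qed

lemma Ext_mono: assumes "P \<subseteq> Q" shows "Ext P \<subseteq> Ext Q"
proof (rule Ext_subset)
  show "P \<subseteq> Ext Q"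
  proof
    fix h assume "h \<in> P"
    then have "h \<in> Q" using assms by (rule subsetD[rotated])
    then show "h \<in> Ext Q" by (rule Ext_single)
  qed
qed

lemma Ext_Some: assumes "k \<in> Ext P" "k w = Some v" shows "\<exists>f\<in>P. f w = Some v"
proof -
  obtain F where F: "F \<noteq> {}" "F \<subseteq> P" "compatible F" "pf_join F = k" "\<forall>f\<in>F. f \<subseteq>\<^sub>m k"
    using assms(1) by (rule ExtE2)
  have "pf_join F w = Some v" using F(4) assms(2) by simp
  then have "\<exists>f\<in>F. f w = Some v" by (rule join_Some)
  then show ?thesis using F(2) by blast
qed

lemma Ext_events: assumes a: "k \<in> Ext P" shows "dom k \<subseteq> events P"
proof
  fix w assume "w \<in> dom k"
  then obtain v where "k w = Some v" by auto
  then obtain f where "f \<in> P" "f w = Some v" using Ext_Some[OF a] by blast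
  then show "w \<in> events P" unfolding events_def by blast
qed

lemma Ext_down:
  assumes "k \<in> Ext P" "k \<subseteq>\<^sub>m h" "\<forall>f\<in>P. f \<subseteq>\<^sub>m h \<longrightarrow> f \<in> Q"
  shows "k \<in> Ext Q"
proof -
  obtain F where F: "F \<noteq> {}" "F \<subseteq> P" "compatible F" "pf_join F = k" "\<forall>f\<in>F. f \<subseteq>\<^sub>m k"
    using assms(1) by (rule ExtE2)
  have "F \<subseteq> Q" using F(2,5) assms(2,3) map_le_trans by blast
  then show ?thesis using ExtI[of F Q] F by simp
qed

lemma jp_nonempty: assumes jp: "join_prime P" shows "Map.empty \<notin> P"
proof
  assume e: "Map.empty \<in> P"
  show False using jp[unfolded join_prime_def, THEN spec[of _ "{}"]] e
    by (simp add: compatible_def pf_join_def)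
qed

lemma jp_subset: "join_prime P \<Longrightarrow> Q \<subseteq> P \<Longrightarrow> join_prime Q"
  unfolding join_prime_def by blast

lemma Ext_inj_aux:
  assumes jp: "join_prime P" and PQ: "P \<subseteq> Ext Q" and QP: "Q \<subseteq> Ext P"
  shows "P \<subseteq> Q"
proof
  fix h assume hP: "h \<in> P"
  then have "h \<in> Ext Q" using PQ by blast
  then obtain F where F: "F \<noteq> {}" "F \<subseteq> Q" "compatible F" "pf_join F = h" "\<forall>f\<in>F. f \<subseteq>\<^sub>m h"
    by (rule ExtE2)
  have "dom h \<subseteq> (\<Union>f\<in>F. dom f)" using F(4) join_dom1[of F] by simp
  moreover have "F \<subseteq> Ext P" using F(2) QP by blast
  ultimately have "\<exists>G. G \<noteq> {} \<and> G \<subseteq> P \<and> compatible G \<and> pf_join G = h \<and> (\<forall>g\<in>G. \<exists>f\<in>F. g \<subseteq>\<^sub>m f)"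
    by (intro flatten[OF F(1) _ F(5)])
  then obtain G where G0: "G \<noteq> {} \<and> G \<subseteq> P \<and> compatible G \<and> pf_join G = h \<and> (\<forall>g\<in>G. \<exists>f\<in>F. g \<subseteq>\<^sub>m f)"
    by (rule exE)
  have G: "G \<noteq> {}" "G \<subseteq> P" "compatible G" "pf_join G = h" "\<forall>g\<in>G. \<exists>f\<in>F. g \<subseteq>\<^sub>m f"
    using G0 by auto
  have "h \<in> G" using jp G(2,3,4) hP unfolding join_prime_def by metis
  then obtain f where f: "f \<in> F" "h \<subseteq>\<^sub>m f" using G(5) by blast
  then have "h = f" using F(5) map_le_antisym by blast
  then show "h \<in> Q" using f F(2) by blast
qed

lemma Ext_inj:
  assumes "join_prime P" "join_prime Q" "Ext P = Ext Q" shows "P = Q"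
proof -
  have "P \<subseteq> Ext Q" "Q \<subseteq> Ext P" using Ext_single assms(3) by blast+
  then show ?thesis using Ext_inj_aux assms by blast
qed


lemma map_le_dom_eq: assumes fg: "f \<subseteq>\<^sub>m g" and d: "dom g \<subseteq> dom f" shows "g = f"
proof (rule map_le_antisym)
  show "g \<subseteq>\<^sub>m f" unfolding map_le_def
  proof
    fix a assume "a \<in> dom g"
    then have "a \<in> dom f" using d by blast
    then show "g a = f a" using fg unfolding map_le_def by simp
  qed
qed (rule fg)

lemma fc_iff: "free_choice P \<longleftrightarrow> total_funs P \<subseteq> Ext P"
proof
  assume "free_choice P"
  then show "total_funs P \<subseteq> Ext P"
    unfolding free_choice_def maximal_ext_def by blast
next
  assume tot: "total_funs P \<subseteq> Ext P"
  have "maximal_ext P \<subseteq> total_funs P"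
  proof
    fix m assume "m \<in> maximal_ext P"
    then have mE: "m \<in> Ext P" and mmax: "\<And>k'. k' \<in> Ext P \<Longrightarrow> m \<subseteq>\<^sub>m k' \<Longrightarrow> k' = m"
      unfolding maximal_ext_def pf_le_def by auto
    define t where "t = (\<lambda>w. if w \<in> dom m then m w
        else if w \<in> events P then Some (SOME v. v \<in> inputs P w) else None)"
    have domm: "dom m \<subseteq> events P" using Ext_events mE .
    have ne: "\<exists>v. v \<in> inputs P w" if wev: "w \<in> events P" for w
    proof -
      obtain h where h: "h \<in> P" "w \<in> dom h" using wev unfolding events_def by blast
      then obtain v where "h w = Some v" by auto
      then have "v \<in> inputs P w" using h unfolding inputs_def by blast
      then show ?thesis by blast
    qed
    have "t \<in> total_funs P"
      unfolding total_funs_def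
    proof (intro CollectI conjI ballI)
      show "dom t = events P"
      proof
        show "dom t \<subseteq> events P"
        proof
          fix w assume wt: "w \<in> dom t"
          show "w \<in> events P"
          proof (cases "w \<in> dom m")
            case True
            then show ?thesis using domm by blast
          next
            case False
            then have "t w = (if w \<in> events P then Some (SOME v. v \<in> inputs P w) else None)"
              unfolding t_def by simp
            then show ?thesis using wt by (cases "w \<in> events P") auto
          qed
        qed
        show "events P \<subseteq> dom t"
        proof
          fix w assume "w \<in> events P"
          then show "w \<in> dom t" unfolding t_def by (cases "w \<in> dom m") auto
        qed
      qed
    next
      fix w assume w: "w \<in> events P"
      show "the (t w) \<in> inputs P w"
      proof (cases "w \<in> dom m")
        case True
        then obtain v where v: "m w = Some v" by auto
        have "\<exists>f\<in>P. f w = Some v" by (rule Ext_Some[OF mE v])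
        then have iv: "v \<in> inputs P w" unfolding inputs_def by blast
        have "t w = Some v" unfolding t_def using True v by simp
        then show ?thesis using iv by simp
      next
        case False
        have "\<exists>v. v \<in> inputs P w" using ne w by blast
        then have "(SOME v. v \<in> inputs P w) \<in> inputs P w" by (rule someI_ex)
        then show ?thesis using False w unfolding t_def by simp
      qed
    qed
    then have "t \<in> Ext P" using tot by blast
    moreover have "m \<subseteq>\<^sub>m t" unfolding t_def map_le_def by auto
    ultimately have "t = m" by (rule mmax)
    then show "m \<in> total_funs P" using \<open>t \<in> total_funs P\<close> by simp
  qed
  moreover have "total_funs P \<subseteq> maximal_ext P"
  proof
    fix t assume t: "t \<in> total_funs P"
    have "\<forall>k'\<in>Ext P. pf_le t k' \<longrightarrow> k' = t"
    proof (intro ballI impI)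
      fix k' assume "k' \<in> Ext P" "pf_le t k'"
      have "dom k' \<subseteq> events P" using Ext_events \<open>k' \<in> Ext P\<close> by blast
      also have "events P = dom t" using t unfolding total_funs_def by simp
      finally have "dom k' \<subseteq> dom t" .
      moreover have "t \<subseteq>\<^sub>m k'" using \<open>pf_le t k'\<close> unfolding pf_le_def .
      ultimately show "k' = t" using map_le_dom_eq[of t k'] by simp
    qed
    then show "t \<in> maximal_ext P" using t tot unfolding maximal_ext_def by blast
  qed
  ultimately show "free_choice P" unfolding free_choice_def by blast
qed

lemma tips_sub:
  assumes "Q \<subseteq> P" "\<forall>f\<in>P. f \<subseteq>\<^sub>m h \<longrightarrow> f \<in> Q"
  shows "tips Q h = tips P h"
proof -
  have "{k. k \<in> Ext Q \<and> pf_less k h} = {k. k \<in> Ext P \<and> pf_less k h}"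
    using Ext_mono[OF assms(1)] Ext_down[OF _ _ assms(2)] unfolding pf_less_def pf_le_def by blast
  then show ?thesis unfolding tips_def by (metis (mono_tags, lifting) mem_Collect_eq)
qed

definition shr :: "('e,'v) pfun set \<Rightarrow> ('e,'v) pfun set \<Rightarrow> ('e,'v) pfun set" where
  "shr C P = {h\<in>C. \<exists>k\<in>Ext P. h \<subseteq>\<^sub>m k}"

definition inS :: "('e,'v) pfun set \<Rightarrow> ('e,'v) pfun set \<Rightarrow> bool" where
  "inS P X \<longleftrightarrow> is_space X \<and> Ext P \<subseteq> Ext X \<and> causally_complete X"

lemma shr_mem: "h \<in> shr C P \<longleftrightarrow> h \<in> C \<and> (\<exists>k\<in>Ext P. h \<subseteq>\<^sub>m k)"
  unfolding shr_def by simp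

lemma shr_props:
  assumes sp: "is_space C" and cc: "causally_complete C" and PC: "Ext P \<subseteq> Ext C" and fc: "free_choice P"
  shows "inS P (shr C P)" "shr C P \<subseteq> C" "events (shr C P) = events P"
proof -
  define D where "D = shr C P"
  have Dm: "h \<in> D \<longleftrightarrow> h \<in> C \<and> (\<exists>k\<in>Ext P. h \<subseteq>\<^sub>m k)" for h
    unfolding D_def by (rule shr_mem)
  have DC: "D \<subseteq> C" using Dm by blast
  have finD: "finite D" using sp DC finite_subset unfolding is_space_def by blast
  have jpD: "join_prime D" using jp_subset[of C D] sp DC unfolding is_space_def by blast
  have spD: "is_space D" using finD jpD unfolding is_space_def by blast
  have PD: "Ext P \<subseteq> Ext D"
  proof
    fix k assume k: "k \<in> Ext P"
    then have kC: "k \<in> Ext C" using PC by blast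
    have "\<forall>f\<in>C. f \<subseteq>\<^sub>m k \<longrightarrow> f \<in> D" using k Dm by blast
    then show "k \<in> Ext D" using Ext_down[of k C k D] kC by simp
  qed
  have evD: "events D = events P"
  proof
    show "events D \<subseteq> events P"
    proof
      fix w assume "w \<in> events D"
      then obtain h where h: "h \<in> D" "w \<in> dom h" unfolding events_def by blast
      then obtain k where k: "k \<in> Ext P" "h \<subseteq>\<^sub>m k" using Dm by blast
      have "dom h \<subseteq> dom k" using k(2) by (rule map_le_implies_dom_le)
      moreover have "dom k \<subseteq> events P" using k(1) by (rule Ext_events)
      ultimately show "w \<in> events P" using h(2) by blast
    qed
  next
    show "events P \<subseteq> events D"
    proof
      fix w assume "w \<in> events P"
      then obtain g where g: "g \<in> P" "w \<in> dom g" unfolding events_def by blast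
      then have "g \<in> Ext P" using Ext_single[of g P] by blast
      then have "g \<in> Ext D" using PD by blast
      then have "dom g \<subseteq> events D" by (rule Ext_events)
      then show "w \<in> events D" using g(2) by blast
    qed
  qed
  have inD: "inputs D = inputs P"
  proof
    fix w
    show "inputs D w = inputs P w"
    proof
      show "inputs D w \<subseteq> inputs P w"
      proof
        fix v assume "v \<in> inputs D w"
        then obtain h where h: "h \<in> D" "h w = Some v" unfolding inputs_def by blast
        then obtain k where k: "k \<in> Ext P" "h \<subseteq>\<^sub>m k" using Dm by blast
        have "w \<in> dom h" using h(2) by blast
        then have "h w = k w" using k(2) unfolding map_le_def by blast
        then have "k w = Some v" using h(2) by simp
        then have "\<exists>f\<in>P. f w = Some v" by (rule Ext_Some[OF k(1)])
        then show "v \<in> inputs P w" unfolding inputs_def by blast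
      qed
    next
      show "inputs P w \<subseteq> inputs D w"
      proof
        fix v assume "v \<in> inputs P w"
        then obtain h where h: "h \<in> P" "h w = Some v" unfolding inputs_def by blast
        then have "h \<in> Ext P" by (intro Ext_single)
        then have "h \<in> Ext D" using PD by blast
        then have "\<exists>f\<in>D. f w = Some v" using h(2) by (rule Ext_Some)
        then show "v \<in> inputs D w" unfolding inputs_def by blast
      qed
    qed
  qed
  have "total_funs D = total_funs P" unfolding total_funs_def evD inD ..
  moreover have "total_funs P \<subseteq> Ext P" using fc fc_iff by blast
  ultimately have "total_funs D \<subseteq> Ext D" using PD by simp
  then have fcD: "free_choice D" using fc_iff by blast
  have "\<forall>h\<in>D. \<exists>w. tips D h = {w}"
  proof
    fix h assume h: "h \<in> D"
    then obtain k where k: "h \<subseteq>\<^sub>m k" "k \<in> Ext P" using Dm by blast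
    have "\<forall>f\<in>C. f \<subseteq>\<^sub>m h \<longrightarrow> f \<in> D"
    proof (intro ballI impI)
      fix f assume "f \<in> C" "f \<subseteq>\<^sub>m h"
      moreover have "f \<subseteq>\<^sub>m k" using \<open>f \<subseteq>\<^sub>m h\<close> k(1) by (rule map_le_trans)
      ultimately show "f \<in> D" using Dm k(2) by blast
    qed
    then have "tips D h = tips C h" using tips_sub[OF DC] by blast
    moreover have "\<exists>w. tips C h = {w}" using cc h DC unfolding causally_complete_def by blast
    ultimately show "\<exists>w. tips D h = {w}" by simp
  qed
  then have "causally_complete D" using fcD unfolding causally_complete_def by blast
  then show "inS P (shr C P)" using spD PD unfolding inS_def D_def by blast
  show "shr C P \<subseteq> C" using DC D_def by simp
  show "events (shr C P) = events P" using evD D_def by simp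
qed

lemma sep:
  assumes "events A \<inter> events B = {}" "Map.empty \<notin> B" "f \<in> A \<union> B" "f \<subseteq>\<^sub>m h" "dom h \<subseteq> events A"
  shows "f \<in> A"
proof (rule ccontr)
  assume "f \<notin> A"
  then have fB: "f \<in> B" using assms(3) by blast
  then have "dom f \<subseteq> events B" unfolding events_def by blast
  moreover have "dom f \<subseteq> dom h" using assms(4) by (rule map_le_implies_dom_le)
  then have "dom f \<subseteq> events A" using assms(5) by (rule subset_trans)
  ultimately have "dom f = {}" using assms(1) by blast
  then have "f = Map.empty" by simp
  then show False using fB assms(2) by simp
qed

lemma restr:
  assumes "events A \<inter> events B = {}" "Map.empty \<notin> B" "h \<in> Ext (A \<union> B)" "dom h \<subseteq> events A"
  shows "h \<in> Ext A"
proof -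
  have "\<forall>f\<in>A \<union> B. f \<subseteq>\<^sub>m h \<longrightarrow> f \<in> A"
  proof (intro ballI impI)
    fix f assume f: "f \<in> A \<union> B" "f \<subseteq>\<^sub>m h"
    show "f \<in> A" by (rule sep[OF assms(1,2) f assms(4)])
  qed
  then show ?thesis by (rule Ext_down[OF assms(3) map_le_refl])
qed

lemma events_Un: "events (A \<union> B) = events A \<union> events B"
  unfolding events_def by (rule UN_Un)

lemma dom_events: "h \<in> P \<Longrightarrow> dom h \<subseteq> events P"
  unfolding events_def by (rule UN_upper)

lemma inputs_restr:
  assumes dis: "events A \<inter> events B = {}" and w: "w \<in> events A" and v: "v \<in> inputs (A \<union> B) w"
  shows "v \<in> inputs A w"
proof -
  obtain h where h: "h \<in> A \<union> B" "w \<in> dom h" "h w = Some v" using v unfolding inputs_def by blast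
  have "h \<notin> B"
  proof
    assume "h \<in> B"
    then have "w \<in> events B" using dom_events[of h B] h(2) by blast
    then show False using dis w by blast
  qed
  then have "h \<in> A" using h(1) by blast
  then show ?thesis using h(2,3) unfolding inputs_def by blast
qed

lemma union_cc:
  assumes spA: "is_space A" and spB: "is_space B" and ccA: "causally_complete A" and ccB: "causally_complete B"
    and dis: "events A \<inter> events B = {}"
  shows "is_space (A \<union> B)" "causally_complete (A \<union> B)"
proof -
  have eA: "Map.empty \<notin> A" using spA jp_nonempty unfolding is_space_def by blast
  have eB: "Map.empty \<notin> B" using spB jp_nonempty unfolding is_space_def by blast
  have dis': "events B \<inter> events A = {}" using dis by blast
  have jpA: "join_prime A" and jpB: "join_prime B" using spA spB unfolding is_space_def by blast+
  have jp: "join_prime (A \<union> B)"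
    unfolding join_prime_def
  proof (intro allI impI)
    fix F assume F: "F \<subseteq> A \<union> B \<and> compatible F \<and> pf_join F \<in> A \<union> B"
    have FAB: "F \<subseteq> A \<union> B" and cF: "compatible F" and JAB: "pf_join F \<in> A \<union> B" using F by blast+
    have ub: "f \<subseteq>\<^sub>m pf_join F" if "f \<in> F" for f using join_ub[OF cF that] .
    show "pf_join F \<in> F"
    proof (cases "pf_join F \<in> A")
      case True
      then have d: "dom (pf_join F) \<subseteq> events A" by (rule dom_events)
      have "F \<subseteq> A"
      proof
        fix f assume f: "f \<in> F"
        then have "f \<in> A \<union> B" using FAB by blast
        then show "f \<in> A" using sep[OF dis eB _ ub[OF f] d] by blast
      qed
      then show ?thesis using cF True jpA unfolding join_prime_def by blast
    next
      case False
      then have J: "pf_join F \<in> B" using JAB by blast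
      then have d: "dom (pf_join F) \<subseteq> events B" by (rule dom_events)
      have "F \<subseteq> B"
      proof
        fix f assume f: "f \<in> F"
        then have "f \<in> B \<union> A" using FAB by blast
        then show "f \<in> B" using sep[OF dis' eA _ ub[OF f] d] by blast
      qed
      then show ?thesis using cF J jpB unfolding join_prime_def by blast
    qed
  qed
  have finAB: "finite (A \<union> B)" using spA spB unfolding is_space_def by blast
  show "is_space (A \<union> B)" using jp finAB unfolding is_space_def by blast
  have fcA: "total_funs A \<subseteq> Ext A" using ccA fc_iff unfolding causally_complete_def by blast
  have fcB: "total_funs B \<subseteq> Ext B" using ccB fc_iff unfolding causally_complete_def by blast
  have fc: "total_funs (A \<union> B) \<subseteq> Ext (A \<union> B)"
  proof
    fix t assume t: "t \<in> total_funs (A \<union> B)"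
    have dt: "dom t = events A \<union> events B" using t events_Un[of A B] unfolding total_funs_def by simp
    have tv: "the (t w) \<in> inputs (A \<union> B) w" if "w \<in> events A \<union> events B" for w
      using t that events_Un[of A B] unfolding total_funs_def by simp
    define tA where "tA = t |` events A"
    define tB where "tB = t |` events B"
    have "tA \<in> total_funs A"
      unfolding total_funs_def
    proof (intro CollectI conjI ballI)
      show "dom tA = events A" unfolding tA_def using dt by auto
      fix w assume w: "w \<in> events A"
      then have "the (t w) \<in> inputs (A \<union> B) w" using tv by blast
      then have "the (t w) \<in> inputs A w" by (rule inputs_restr[OF dis w])
      then show "the (tA w) \<in> inputs A w" unfolding tA_def using w by simp
    qed
    then have "tA \<in> Ext A" using fcA by blast
    then have tAE: "tA \<in> Ext (A \<union> B)" using Ext_mono[of A "A \<union> B"] by blast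
    have "tB \<in> total_funs B"
      unfolding total_funs_def
    proof (intro CollectI conjI ballI)
      show "dom tB = events B" unfolding tB_def using dt by auto
      fix w assume w: "w \<in> events B"
      then have "the (t w) \<in> inputs (B \<union> A) w" using tv by (simp add: Un_commute)
      then have "the (t w) \<in> inputs B w" by (rule inputs_restr[OF dis' w])
      then show "the (tB w) \<in> inputs B w" unfolding tB_def using w by simp
    qed
    then have "tB \<in> Ext B" using fcB by blast
    then have tBE: "tB \<in> Ext (A \<union> B)" using Ext_mono[of B "A \<union> B"] by blast
    have le: "f \<subseteq>\<^sub>m t" if "f \<in> {tA, tB}" for f
      using that unfolding tA_def tB_def map_le_def by (auto simp: restrict_map_def dom_def split: if_splits)
    have c: "compatible {tA, tB}" using le by (rule compatible_below)
    have "dom t \<subseteq> (\<Union>f\<in>{tA,tB}. dom f)" using dt unfolding tA_def tB_def by auto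
    then have j: "pf_join {tA, tB} = t" using c le by (intro join_eqI)
    have "pf_join {tA, tB} \<in> Ext {tA, tB}" using c by (intro ExtI) auto
    then have "t \<in> Ext {tA, tB}" using j by simp
    moreover have "Ext {tA, tB} \<subseteq> Ext (A \<union> B)" using tAE tBE by (intro Ext_subset) simp
    ultimately show "t \<in> Ext (A \<union> B)" by blast
  qed
  have tips: "\<forall>h\<in>A \<union> B. \<exists>w. tips (A \<union> B) h = {w}"
  proof
    fix h assume h: "h \<in> A \<union> B"
    show "\<exists>w. tips (A \<union> B) h = {w}"
    proof (cases "h \<in> A")
      case True
      then have d: "dom h \<subseteq> events A" by (rule dom_events)
      have "\<forall>f\<in>A \<union> B. f \<subseteq>\<^sub>m h \<longrightarrow> f \<in> A"
      proof (intro ballI impI)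
        fix f assume f: "f \<in> A \<union> B" "f \<subseteq>\<^sub>m h"
        show "f \<in> A" by (rule sep[OF dis eB f d])
      qed
      then have "tips A h = tips (A \<union> B) h" using tips_sub[of A "A \<union> B"] by blast
      moreover have "\<exists>w. tips A h = {w}" using ccA True unfolding causally_complete_def by blast
      ultimately show ?thesis by simp
    next
      case False
      then have hB: "h \<in> B" using h by blast
      then have d: "dom h \<subseteq> events B" by (rule dom_events)
      have "\<forall>f\<in>A \<union> B. f \<subseteq>\<^sub>m h \<longrightarrow> f \<in> B"
      proof (intro ballI impI)
        fix f assume f: "f \<in> A \<union> B" "f \<subseteq>\<^sub>m h"
        then have f': "f \<in> B \<union> A" by blast
        show "f \<in> B" by (rule sep[OF dis' eA f' f(2) d])
      qed
      then have "tips B h = tips (A \<union> B) h" using tips_sub[of B "A \<union> B"] by blast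
      moreover have "\<exists>w. tips B h = {w}" using ccB hB unfolding causally_complete_def by blast
      ultimately show ?thesis by simp
    qed
  qed
  have "free_choice (A \<union> B)" using fc fc_iff by blast
  then show "causally_complete (A \<union> B)" using tips unfolding causally_complete_def by blast
qed

lemma CC_iff: "X \<in> CC P \<longleftrightarrow> inS P X \<and> (\<forall>Y. inS P Y \<longrightarrow> Ext Y \<subseteq> Ext X \<longrightarrow> Ext X \<subseteq> Ext Y)"
  unfolding CC_def inS_def space_le_def Let_def by auto

lemma inS_Un:
  assumes iA: "inS P A" and iB: "inS Q B" and dis: "events A \<inter> events B = {}"
  shows "inS (P \<union> Q) (A \<union> B)"
proof -
  have spA: "is_space A" and ccA: "causally_complete A" and PA: "Ext P \<subseteq> Ext A"
    using iA unfolding inS_def by blast+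
  have spB: "is_space B" and ccB: "causally_complete B" and QB: "Ext Q \<subseteq> Ext B"
    using iB unfolding inS_def by blast+
  have sp: "is_space (A \<union> B)" by (rule union_cc(1)[OF spA spB ccA ccB dis])
  have cc: "causally_complete (A \<union> B)" by (rule union_cc(2)[OF spA spB ccA ccB dis])
  have "P \<union> Q \<subseteq> Ext (A \<union> B)"
  proof
    fix h assume "h \<in> P \<union> Q"
    then show "h \<in> Ext (A \<union> B)"
    proof
      assume "h \<in> P"
      then have "h \<in> Ext P" by (intro Ext_single)
      then have "h \<in> Ext A" using PA by blast
      moreover have "Ext A \<subseteq> Ext (A \<union> B)" by (intro Ext_mono) simp
      ultimately show ?thesis by blast
    next
      assume "h \<in> Q"
      then have "h \<in> Ext Q" by (intro Ext_single)
      then have "h \<in> Ext B" using QB by blast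
      moreover have "Ext B \<subseteq> Ext (A \<union> B)" by (intro Ext_mono) simp
      ultimately show ?thesis by blast
    qed
  qed
  then have "Ext (P \<union> Q) \<subseteq> Ext (A \<union> B)" by (rule Ext_subset)
  then show ?thesis using sp cc unfolding inS_def by blast
qed

lemma jp_of: "inS P X \<Longrightarrow> join_prime X"
  unfolding inS_def is_space_def by blast

lemma CC_inS: "X \<in> CC P \<Longrightarrow> inS P X"
  using CC_iff by blast

lemma CC_max: "X \<in> CC P \<Longrightarrow> inS P Y \<Longrightarrow> Ext Y \<subseteq> Ext X \<Longrightarrow> Ext X \<subseteq> Ext Y"
  using CC_iff by blast

lemma CC_I: "inS P X \<Longrightarrow> (\<And>Y. inS P Y \<Longrightarrow> Ext Y \<subseteq> Ext X \<Longrightarrow> Ext X \<subseteq> Ext Y) \<Longrightarrow> X \<in> CC P"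
  using CC_iff by blast

lemma inS_parts: "inS P X \<Longrightarrow> is_space X" "inS P X \<Longrightarrow> causally_complete X" "inS P X \<Longrightarrow> Ext P \<subseteq> Ext X"
  unfolding inS_def by blast+

lemma sub_Ext: "A \<subseteq> B \<Longrightarrow> A \<subseteq> Ext B"
  using Ext_single by blast

lemma CC_events:
  assumes X: "X \<in> CC P" and fc: "free_choice P"
  shows "events X = events P"
proof -
  have iX: "inS P X" using X by (rule CC_inS)
  have D1: "inS P (shr X P)" and D2: "shr X P \<subseteq> X" and D3: "events (shr X P) = events P"
    using shr_props[OF inS_parts(1)[OF iX] inS_parts(2)[OF iX] inS_parts(3)[OF iX] fc] by blast+
  have s: "Ext (shr X P) \<subseteq> Ext X" using D2 by (rule Ext_mono)
  have "Ext X \<subseteq> Ext (shr X P)" by (rule CC_max[OF X D1 s])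
  then have "Ext X = Ext (shr X P)" using s by (rule equalityI)
  then have "X = shr X P" using Ext_inj[OF jp_of[OF iX] jp_of[OF D1]] by blast
  then show ?thesis using D3 by simp
qed

lemma half_sub:
  assumes fc: "free_choice T" and dis: "events T \<inter> events T' = {}"
    and C: "C \<in> CC (T \<union> T')" and iA: "inS T DA" and iB: "inS T' DB"
    and eA: "events DA = events T" and eB: "events DB = events T'" and CU: "C = DA \<union> DB"
  shows "DA \<in> CC T"
proof (rule CC_I[OF iA])
  fix Y assume iY: "inS T Y" and YA: "Ext Y \<subseteq> Ext DA"
  define Y' where "Y' = shr Y T"
  have Y1: "inS T Y'" and Y2: "Y' \<subseteq> Y" and Y3: "events Y' = events T"
    using shr_props[OF inS_parts(1)[OF iY] inS_parts(2)[OF iY] inS_parts(3)[OF iY] fc]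
    unfolding Y'_def by blast+
  have dis2: "events Y' \<inter> events DB = {}" using Y3 eB dis by simp
  have iU: "inS (T \<union> T') (Y' \<union> DB)" by (rule inS_Un[OF Y1 iB dis2])
  have DAC: "DA \<subseteq> C" and DBC: "DB \<subseteq> C" using CU by blast+
  have "Y' \<subseteq> Ext Y" using Y2 by (rule sub_Ext)
  also have "\<dots> \<subseteq> Ext DA" by (rule YA)
  also have "\<dots> \<subseteq> Ext C" using DAC by (rule Ext_mono)
  finally have Y'C: "Y' \<subseteq> Ext C" .
  have "DB \<subseteq> Ext C" using DBC by (rule sub_Ext)
  then have "Y' \<union> DB \<subseteq> Ext C" using Y'C by blast
  then have "Ext (Y' \<union> DB) \<subseteq> Ext C" by (rule Ext_subset)
  then have CY: "Ext C \<subseteq> Ext (Y' \<union> DB)" by (rule CC_max[OF C iU])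
  have eDB: "Map.empty \<notin> DB" using jp_of[OF iB] by (rule jp_nonempty)
  have "DA \<subseteq> Ext Y"
  proof
    fix h assume h: "h \<in> DA"
    then have "h \<in> C" using DAC by blast
    then have "h \<in> Ext C" by (rule Ext_single)
    then have hU: "h \<in> Ext (Y' \<union> DB)" using CY by blast
    have "dom h \<subseteq> events DA" using h by (rule dom_events)
    then have dh: "dom h \<subseteq> events Y'" using eA Y3 by simp
    have "h \<in> Ext Y'" by (rule restr[OF dis2 eDB hU dh])
    moreover have "Ext Y' \<subseteq> Ext Y" using Y2 by (rule Ext_mono)
    ultimately show "h \<in> Ext Y" by blast
  qed
  then show "Ext DA \<subseteq> Ext Y" by (rule Ext_subset)
qed

lemma half_sup:
  assumes fc: "free_choice T" and A: "A \<in> CC T" and eA: "events A = events T"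
    and spB: "is_space B" and dis: "events A \<inter> events B = {}"
    and iC: "inS (T \<union> T') C" and CAB: "Ext C \<subseteq> Ext (A \<union> B)"
  shows "Ext A \<subseteq> Ext C"
proof -
  have "Ext T \<subseteq> Ext (T \<union> T')" by (intro Ext_mono) simp
  then have TC: "Ext T \<subseteq> Ext C" using inS_parts(3)[OF iC] by (rule subset_trans)
  have D1: "inS T (shr C T)" and D2: "shr C T \<subseteq> C" and D3: "events (shr C T) = events T"
    using shr_props[OF inS_parts(1)[OF iC] inS_parts(2)[OF iC] TC fc] by blast+
  have eB: "Map.empty \<notin> B" using spB jp_nonempty unfolding is_space_def by blast
  have "shr C T \<subseteq> Ext A"
  proof
    fix h assume h: "h \<in> shr C T"
    then have "h \<in> C" using D2 by blast
    then have "h \<in> Ext C" by (rule Ext_single)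
    then have hU: "h \<in> Ext (A \<union> B)" using CAB by blast
    have "dom h \<subseteq> events (shr C T)" using h by (rule dom_events)
    then have dh: "dom h \<subseteq> events A" using D3 eA by simp
    show "h \<in> Ext A" by (rule restr[OF dis eB hU dh])
  qed
  then have "Ext (shr C T) \<subseteq> Ext A" by (rule Ext_subset)
  then have "Ext A \<subseteq> Ext (shr C T)" by (rule CC_max[OF A D1])
  moreover have "Ext (shr C T) \<subseteq> Ext C" using D2 by (rule Ext_mono)
  ultimately show ?thesis by (rule subset_trans)
qed

theorem theorem1:
  fixes \<Theta> \<Theta>' :: "('e,'v) pfun set"
  assumes "is_space \<Theta>" and "is_space \<Theta>'"
    and "free_choice \<Theta>" and "free_choice \<Theta>'"
    and "events \<Theta> \<inter> events \<Theta>' = {}"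
  shows "CC (\<Theta> \<union> \<Theta>') = {A \<union> B | A B. A \<in> CC \<Theta> \<and> B \<in> CC \<Theta>'}"
proof
  show "CC (\<Theta> \<union> \<Theta>') \<subseteq> {A \<union> B | A B. A \<in> CC \<Theta> \<and> B \<in> CC \<Theta>'}"
  proof
    fix C assume C: "C \<in> CC (\<Theta> \<union> \<Theta>')"
    then have iC: "inS (\<Theta> \<union> \<Theta>') C" by (rule CC_inS)
    have "Ext \<Theta> \<subseteq> Ext (\<Theta> \<union> \<Theta>')" by (intro Ext_mono) simp
    then have TC1: "Ext \<Theta> \<subseteq> Ext C" using inS_parts(3)[OF iC] by (rule subset_trans)
    have "Ext \<Theta>' \<subseteq> Ext (\<Theta> \<union> \<Theta>')" by (intro Ext_mono) simp
    then have TC2: "Ext \<Theta>' \<subseteq> Ext C" using inS_parts(3)[OF iC] by (rule subset_trans)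
    define DA where "DA = shr C \<Theta>"
    define DB where "DB = shr C \<Theta>'"
    have A1: "inS \<Theta> DA" and A2: "DA \<subseteq> C" and A3: "events DA = events \<Theta>"
      using shr_props[OF inS_parts(1)[OF iC] inS_parts(2)[OF iC] TC1 assms(3)] unfolding DA_def by blast+
    have B1: "inS \<Theta>' DB" and B2: "DB \<subseteq> C" and B3: "events DB = events \<Theta>'"
      using shr_props[OF inS_parts(1)[OF iC] inS_parts(2)[OF iC] TC2 assms(4)] unfolding DB_def by blast+
    have disD: "events DA \<inter> events DB = {}" using A3 B3 assms(5) by simp
    have iU: "inS (\<Theta> \<union> \<Theta>') (DA \<union> DB)" by (rule inS_Un[OF A1 B1 disD])
    have "DA \<union> DB \<subseteq> C" using A2 B2 by blast
    then have s: "Ext (DA \<union> DB) \<subseteq> Ext C" by (rule Ext_mono)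
    have "Ext C \<subseteq> Ext (DA \<union> DB)" by (rule CC_max[OF C iU s])
    then have "Ext C = Ext (DA \<union> DB)" using s by (rule equalityI)
    then have CU: "C = DA \<union> DB" using Ext_inj[OF jp_of[OF iC] jp_of[OF iU]] by blast
    have "DA \<in> CC \<Theta>" by (rule half_sub[OF assms(3) assms(5) C A1 B1 A3 B3 CU])
    moreover have "DB \<in> CC \<Theta>'"
    proof -
      have C': "C \<in> CC (\<Theta>' \<union> \<Theta>)" using C by (simp add: Un_commute)
      have d': "events \<Theta>' \<inter> events \<Theta> = {}" using assms(5) by blast
      have CU': "C = DB \<union> DA" using CU by blast
      show ?thesis by (rule half_sub[OF assms(4) d' C' B1 A1 B3 A3 CU'])
    qed
    ultimately show "C \<in> {A \<union> B | A B. A \<in> CC \<Theta> \<and> B \<in> CC \<Theta>'}" using CU by blast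
  qed
next
  show "{A \<union> B | A B. A \<in> CC \<Theta> \<and> B \<in> CC \<Theta>'} \<subseteq> CC (\<Theta> \<union> \<Theta>')"
  proof
    fix X assume "X \<in> {A \<union> B | A B. A \<in> CC \<Theta> \<and> B \<in> CC \<Theta>'}"
    then obtain A B where X: "X = A \<union> B" and A: "A \<in> CC \<Theta>" and B: "B \<in> CC \<Theta>'" by blast
    have eA: "events A = events \<Theta>" by (rule CC_events[OF A assms(3)])
    have eB: "events B = events \<Theta>'" by (rule CC_events[OF B assms(4)])
    have iA: "inS \<Theta> A" by (rule CC_inS[OF A])
    have iB: "inS \<Theta>' B" by (rule CC_inS[OF B])
    have dis: "events A \<inter> events B = {}" using eA eB assms(5) by simp
    have dis': "events B \<inter> events A = {}" using dis by blast
    have iX: "inS (\<Theta> \<union> \<Theta>') (A \<union> B)" by (rule inS_Un[OF iA iB dis])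
    have "A \<union> B \<in> CC (\<Theta> \<union> \<Theta>')"
    proof (rule CC_I[OF iX])
      fix C assume iC: "inS (\<Theta> \<union> \<Theta>') C" and CAB: "Ext C \<subseteq> Ext (A \<union> B)"
      have AC: "Ext A \<subseteq> Ext C"
        by (rule half_sup[OF assms(3) A eA inS_parts(1)[OF iB] dis iC CAB])
      have iC': "inS (\<Theta>' \<union> \<Theta>) C" using iC by (simp add: Un_commute)
      have CBA: "Ext C \<subseteq> Ext (B \<union> A)" using CAB by (simp add: Un_commute)
      have BC: "Ext B \<subseteq> Ext C"
        by (rule half_sup[OF assms(4) B eB inS_parts(1)[OF iA] dis' iC' CBA])
      have "A \<subseteq> Ext C" using AC sub_Ext[of A A] by blast
      moreover have "B \<subseteq> Ext C" using BC sub_Ext[of B B] by blast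
      ultimately have "A \<union> B \<subseteq> Ext C" by blast
      then show "Ext (A \<union> B) \<subseteq> Ext C" by (rule Ext_subset)
    qed
    then show "X \<in> CC (\<Theta> \<union> \<Theta>')" using X by simp
  qed
qed

end
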